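(* Let $G$ and $H$ be two connected graphs with $\mathrm{toi}(G)=3$ and $\mathrm{toi}(H)=2$. Then $\mathrm{toi}(G \square H) \geq 3$. Furthermore, equality holds when $G=K_3$ and $H=K_2$. In general, if $H$ is not isomorphic to $K_2$, then $\mathrm{toi}(G \square H) \geq 4$.
   Context: $\mathrm{toi}(G)$ is the maximum $t$ such that $G$ contains a totally odd strong immersion of $K_t$ (an injective map of $V(K_t)$ into $V(G)$ with pairwise edge-disjoint odd paths joining each pair of terminals, no terminal being an interior vertex of any path). $G\square H$ is the Cartesian product: vertex set $V(G)\times V(H)$, with $(g_1,h_1)\sim(g_2,h_2)$ iff ($g_1=g_2$ and $h_1h_2\in E(H)$) or ($h_1=h_2$ and $g_1g_2\in E(G)$). *)

theory Defs
  imports Main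
begin

type_synonym 'a graph = "'a set \<times> 'a set set"

definition verts :: "'a graph \<Rightarrow> 'a set" where "verts G = fst G"
definition edges :: "'a graph \<Rightarrow> 'a set set" where "edges G = snd G"

definition wf_graph :: "'a graph \<Rightarrow> bool" where
  "wf_graph G \<longleftrightarrow> finite (verts G) \<and>
     (\<forall>e\<in>edges G. e \<subseteq> verts G \<and> card e = 2)"

definition is_path :: "'a graph \<Rightarrow> 'a list \<Rightarrow> bool" where
  "is_path G p \<longleftrightarrow> p \<noteq> [] \<and> distinct p \<and> set p \<subseteq> verts G \<and>
     (\<forall>i. Suc i < length p \<longrightarrow> {p ! i, p ! Suc i} \<in> edges G)"

definition path_edges :: "'a list \<Rightarrow> 'a set set" where
  "path_edges p = {{p ! i, p ! Suc i} | i. Suc i < length p}"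

definition interior :: "'a list \<Rightarrow> 'a set" where
  "interior p = set (butlast (tl p))"

definition odd_path :: "'a list \<Rightarrow> bool" where
  "odd_path p \<longleftrightarrow> odd (length p - 1)"

definition connected_graph :: "'a graph \<Rightarrow> bool" where
  "connected_graph G \<longleftrightarrow> verts G \<noteq> {} \<and>
     (\<forall>u\<in>verts G. \<forall>v\<in>verts G. \<exists>p. is_path G p \<and> hd p = u \<and> last p = v)"

text \<open>Totally odd strong immersion of K_t: terminals f 0..f (t-1), and for each pair
  i<j an odd path P i j from f i to f j; paths pairwise edge-disjoint; no terminal is
  an interior vertex of any path.\<close>
definition toi_immersion :: "'a graph \<Rightarrow> nat \<Rightarrow> (nat \<Rightarrow> 'a) \<Rightarrow> (nat \<Rightarrow> nat \<Rightarrow> 'a list) \<Rightarrow> bool" where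
  "toi_immersion G t f P \<longleftrightarrow>
     inj_on f {..<t} \<and> f ` {..<t} \<subseteq> verts G \<and>
     (\<forall>i j. i < j \<and> j < t \<longrightarrow>
        is_path G (P i j) \<and> hd (P i j) = f i \<and> last (P i j) = f j \<and> odd_path (P i j) \<and>
        (\<forall>k<t. f k \<notin> interior (P i j))) \<and>
     (\<forall>i j i' j'. i < j \<and> j < t \<and> i' < j' \<and> j' < t \<and> (i, j) \<noteq> (i', j') \<longrightarrow>
        path_edges (P i j) \<inter> path_edges (P i' j') = {})"

definition has_toi :: "'a graph \<Rightarrow> nat \<Rightarrow> bool" where
  "has_toi G t \<longleftrightarrow> (\<exists>f P. toi_immersion G t f P)"

definition toi :: "'a graph \<Rightarrow> nat" where
  "toi G = Max {t. has_toi G t}"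

definition cart_prod :: "'a graph \<Rightarrow> 'b graph \<Rightarrow> ('a \<times> 'b) graph" where
  "cart_prod G H = (verts G \<times> verts H,
     {{(g, h1), (g, h2)} | g h1 h2. g \<in> verts G \<and> {h1, h2} \<in> edges H} \<union>
     {{(g1, h), (g2, h)} | g1 g2 h. h \<in> verts H \<and> {g1, g2} \<in> edges G})"

definition complete_graph :: "nat \<Rightarrow> nat graph" where
  "complete_graph n = ({..<n}, {{i, j} | i j. i < n \<and> j < n \<and> i \<noteq> j})"

definition graph_iso :: "'a graph \<Rightarrow> 'b graph \<Rightarrow> bool" where
  "graph_iso G H \<longleftrightarrow> (\<exists>f. bij_betw f (verts G) (verts H) \<and>
     (\<forall>u\<in>verts G. \<forall>v\<in>verts G. {u, v} \<in> edges G \<longleftrightarrow> {f u, f v} \<in> edges H))"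

end

theory Submission
  imports Defs
begin


fun wk :: "'a graph \<Rightarrow> 'a list \<Rightarrow> bool" where
  "wk G (x # y # zs) = ({x, y} \<in> edges G \<and> wk G (y # zs))"
| "wk G _ = True"

fun pe :: "'a list \<Rightarrow> 'a set set" where
  "pe (x # y # zs) = insert {x, y} (pe (y # zs))"
| "pe _ = {}"

lemma wk_nth: "wk G xs \<longleftrightarrow> (\<forall>i. Suc i < length xs \<longrightarrow> {xs ! i, xs ! Suc i} \<in> edges G)"
proof (induction G xs rule: wk.induct)
  case (1 G x y zs)
  show ?case
  proof
    assume "wk G (x # y # zs)"
    then show "\<forall>i. Suc i < length (x # y # zs) \<longrightarrow> {(x # y # zs) ! i, (x # y # zs) ! Suc i} \<in> edges G"
      using 1 by (auto simp: nth_Cons split: nat.splits)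
  next
    assume H: "\<forall>i. Suc i < length (x # y # zs) \<longrightarrow> {(x # y # zs) ! i, (x # y # zs) ! Suc i} \<in> edges G"
    have "{x,y} \<in> edges G" using H[rule_format, of 0] by simp
    moreover have "\<forall>i. Suc i < length (y # zs) \<longrightarrow> {(y # zs) ! i, (y # zs) ! Suc i} \<in> edges G"
      using H[rule_format, of "Suc _"] by simp
    ultimately show "wk G (x # y # zs)" using 1 by simp
  qed
qed auto

lemma pe_nth: "path_edges xs = pe xs"
proof (induction xs rule: pe.induct)
  case (1 x y zs)
  have "path_edges (x # y # zs) = insert {x,y} (path_edges (y # zs))"
    unfolding path_edges_def
  proof (intro set_eqI iffI)
    fix e assume "e \<in> {{(x # y # zs) ! i, (x # y # zs) ! Suc i} |i. Suc i < length (x # y # zs)}"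
    then obtain i where "e = {(x # y # zs) ! i, (x # y # zs) ! Suc i}" "Suc i < length (x # y # zs)" by blast
    then show "e \<in> insert {x, y} {{(y # zs) ! i, (y # zs) ! Suc i} |i. Suc i < length (y # zs)}"
      by (cases i) auto
  next
    fix e assume "e \<in> insert {x, y} {{(y # zs) ! i, (y # zs) ! Suc i} |i. Suc i < length (y # zs)}"
    then show "e \<in> {{(x # y # zs) ! i, (x # y # zs) ! Suc i} |i. Suc i < length (x # y # zs)}"
    proof
      assume "e = {x,y}" then show ?thesis by (auto intro!: exI[of _ 0])
    next
      assume "e \<in> {{(y # zs) ! i, (y # zs) ! Suc i} |i. Suc i < length (y # zs)}"
      then obtain i where "e = {(y # zs) ! i, (y # zs) ! Suc i}" "Suc i < length (y # zs)" by blast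
      then show ?thesis by (auto intro!: exI[of _ "Suc i"])
    qed
  qed
  then show ?case using 1 by simp
qed (auto simp: path_edges_def)

lemma is_path_rec: "is_path G p \<longleftrightarrow> p \<noteq> [] \<and> distinct p \<and> set p \<subseteq> verts G \<and> wk G p"
  unfolding is_path_def wk_nth by blast


lemma wk_Cons: "wk G (x # ys) \<longleftrightarrow> (ys = [] \<or> ({x, hd ys} \<in> edges G \<and> wk G ys))"
  by (cases ys) auto

lemma pe_Cons: "pe (x # ys) = (if ys = [] then {} else insert {x, hd ys} (pe ys))"
  by (cases ys) auto

lemma wk_append: "xs \<noteq> [] \<Longrightarrow> ys \<noteq> [] \<Longrightarrow>
   wk G (xs @ ys) \<longleftrightarrow> wk G xs \<and> wk G ys \<and> {last xs, hd ys} \<in> edges G"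
  by (induction xs rule: wk.induct) (auto simp: wk_Cons)

lemma pe_append: "xs \<noteq> [] \<Longrightarrow> ys \<noteq> [] \<Longrightarrow>
   pe (xs @ ys) = pe xs \<union> pe ys \<union> {{last xs, hd ys}}"
  by (induction xs rule: pe.induct) (auto simp: pe_Cons)

lemma wk_rev: "wk G (rev xs) \<longleftrightarrow> wk G xs"
proof (induction xs rule: pe.induct)
  case (1 x y zs)
  have e: "rev (x#y#zs) = rev (y#zs) @ [x]" by simp
  show ?case unfolding e by (subst wk_append) (use 1 in \<open>auto simp: insert_commute\<close>)
qed auto

lemma pe_rev: "pe (rev xs) = pe xs"
proof (induction xs rule: pe.induct)
  case (1 x y zs)
  have e: "rev (x#y#zs) = rev (y#zs) @ [x]" by simp
  show ?case unfolding e by (subst pe_append) (use 1 in \<open>auto simp: insert_commute\<close>)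
qed auto

lemma wk_map:
  assumes "\<And>a b. {a, b} \<in> edges G \<Longrightarrow> {g a, g b} \<in> edges G'"
  shows "wk G xs \<Longrightarrow> wk G' (map g xs)"
  by (induction xs) (auto simp: assms wk_Cons hd_map)

lemma pe_map: "pe (map g xs) = (\<lambda>e. g ` e) ` pe xs"
  by (induction xs rule: pe.induct) auto

lemma pe_sub: "e \<in> pe xs \<Longrightarrow> \<exists>a b. e = {a, b} \<and> a \<in> set xs \<and> b \<in> set xs"
  by (induction xs rule: pe.induct) auto

lemma pe_edges: "wk G xs \<Longrightarrow> pe xs \<subseteq> edges G"
  by (induction G xs rule: wk.induct) auto

lemma pe_card: "distinct xs \<Longrightarrow> card (pe xs) = length xs - 1"
proof (induction xs rule: pe.induct)
  case (1 x y zs)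
  have fin: "finite (pe (y # zs))" by (induction "y # zs" arbitrary: y zs rule: pe.induct) auto
  have "{x, y} \<notin> pe (y # zs)" using 1(2) pe_sub[of "{x,y}" "y # zs"] by (auto simp: doubleton_eq_iff)
  then show ?case using 1 fin by simp
qed auto

lemma pe_finite: "finite (pe xs)"
  by (induction xs rule: pe.induct) auto

lemma interior_distinct: "distinct p \<Longrightarrow> hd p \<notin> interior p \<and> last p \<notin> interior p"
proof (cases p)
  case (Cons x ys)
  assume d: "distinct p"
  have 1: "hd p \<notin> interior p" using d Cons by (auto simp: interior_def dest: in_set_butlastD)
  have 2: "last p \<notin> interior p"
  proof (cases "ys = []")
    case True then show ?thesis using Cons by (simp add: interior_def)
  next
    case False
    have "distinct (butlast ys @ [last ys])" using d Cons False by (simp add: append_butlast_last_id)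
    then have "last ys \<notin> set (butlast ys)" by simp
    then show ?thesis using Cons False by (auto simp: interior_def dest: in_set_butlastD)
  qed
  show ?thesis using 1 2 by simp
qed (simp add: interior_def)


lemma cp_verts: "verts (cart_prod G H) = verts G \<times> verts H"
  by (simp add: cart_prod_def verts_def)

lemma cp_vert: "g \<in> verts G \<Longrightarrow> {h1, h2} \<in> edges H \<Longrightarrow> {(g, h1), (g, h2)} \<in> edges (cart_prod G H)"
  unfolding cart_prod_def edges_def by auto

lemma cp_hor: "h \<in> verts H \<Longrightarrow> {g1, g2} \<in> edges G \<Longrightarrow> {(g1, h), (g2, h)} \<in> edges (cart_prod G H)"
  unfolding cart_prod_def edges_def by fastforce

lemma has_toi_le: assumes "finite (verts G)" "has_toi G t" shows "t \<le> card (verts G)"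
proof -
  obtain f P where "toi_immersion G t f P" using assms(2) has_toi_def by blast
  then have "inj_on f {..<t}" "f ` {..<t} \<subseteq> verts G" unfolding toi_immersion_def by auto
  then show ?thesis using card_inj_on_le[of f "{..<t}" "verts G"] assms(1) by auto
qed

lemma has_toi_0: "has_toi G 0"
  unfolding has_toi_def toi_immersion_def by auto

lemma toi_fin: "finite (verts G) \<Longrightarrow> finite {t. has_toi G t}"
  using has_toi_le by (metis (mono_tags, lifting) finite_nat_set_iff_bounded_le mem_Collect_eq)

lemma toi_ge: "finite (verts G) \<Longrightarrow> has_toi G t \<Longrightarrow> t \<le> toi G"
  unfolding toi_def by (metis Max_ge mem_Collect_eq toi_fin)

lemma toi_has: "finite (verts G) \<Longrightarrow> has_toi G (toi G)"
proof -
  assume "finite (verts G)"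
  moreover have "{t. has_toi G t} \<noteq> {}" using has_toi_0[of G] by auto
  ultimately have "Max {t. has_toi G t} \<in> {t. has_toi G t}" using toi_fin[of G] by (intro Max_in) auto
  then show ?thesis unfolding toi_def by simp
qed

lemma has_toi_mono: assumes "has_toi G t" "s \<le> t" shows "has_toi G s"
proof -
  obtain f P where I: "toi_immersion G t f P" using assms(1) has_toi_def by blast
  have c1: "inj_on f {..<s}" using I assms(2) unfolding toi_immersion_def
      by (meson inj_on_subset lessThan_subset_iff)
  have c2: "f ` {..<s} \<subseteq> verts G" using I assms(2) unfolding toi_immersion_def by auto
  have c3: "is_path G (P i j) \<and> hd (P i j) = f i \<and> last (P i j) = f j \<and> odd_path (P i j) \<and>
        (\<forall>k<s. f k \<notin> interior (P i j))" if a: "i < j \<and> j < s" for i j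
  proof -
    have a': "i < j \<and> j < t" using assms(2) a by simp
    then have "is_path G (P i j) \<and> hd (P i j) = f i \<and> last (P i j) = f j \<and> odd_path (P i j) \<and>
        (\<forall>k<t. f k \<notin> interior (P i j))" using I unfolding toi_immersion_def by blast
    then show ?thesis using assms(2) by auto
  qed
  have c4: "path_edges (P i j) \<inter> path_edges (P i' j') = {}"
    if "i < j \<and> j < s \<and> i' < j' \<and> j' < s \<and> (i, j) \<noteq> (i', j')" for i j i' j'
  proof -
    have "i < j \<and> j < t \<and> i' < j' \<and> j' < t \<and> (i, j) \<noteq> (i', j')" using that assms(2) by auto
    then show ?thesis using I unfolding toi_immersion_def by blast
  qed
  have "toi_immersion G s f P" unfolding toi_immersion_def using c1 c2 c3 c4 by blast
  then show ?thesis using has_toi_def by blast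
qed




lemma interior_map: "interior (map g p) = g ` interior p"
  unfolding interior_def by (simp add: map_butlast[symmetric] map_tl[symmetric])

lemma layer_imm:
  assumes I: "toi_immersion G t f P" and h: "h \<in> verts H"
  shows "toi_immersion (cart_prod G H) t (\<lambda>i. (f i, h)) (\<lambda>i j. map (\<lambda>y. (y, h)) (P i j))"
proof -
  let ?g = "\<lambda>y. (y, h)"
  have ig: "inj ?g" by (auto simp: inj_def)
  have c1: "inj_on (\<lambda>i. (f i, h)) {..<t}" using I unfolding toi_immersion_def inj_on_def by auto
  have c2: "(\<lambda>i. (f i, h)) ` {..<t} \<subseteq> verts (cart_prod G H)" using I h unfolding toi_immersion_def cp_verts by auto
  have c3: "is_path (cart_prod G H) (map ?g (P i j)) \<and> hd (map ?g (P i j)) = (f i, h) \<and>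
      last (map ?g (P i j)) = (f j, h) \<and> odd_path (map ?g (P i j)) \<and>
        (\<forall>k<t. (f k, h) \<notin> interior (map ?g (P i j)))" if a: "i < j \<and> j < t" for i j
  proof -
    have p: "is_path G (P i j)" "hd (P i j) = f i" "last (P i j) = f j" "odd_path (P i j)"
        "\<forall>k<t. f k \<notin> interior (P i j)" using I a unfolding toi_immersion_def by auto
    have "is_path (cart_prod G H) (map ?g (P i j))"
      using p(1) h unfolding is_path_rec cp_verts
      by (auto simp: distinct_map ig inj_on_def intro: wk_map[where G=G] cp_hor)
    moreover have "P i j \<noteq> []" using p(1) is_path_def by blast
    ultimately show ?thesis using p by (auto simp: hd_map last_map odd_path_def interior_map)
  qed
  have c4: "path_edges (map ?g (P i j)) \<inter> path_edges (map ?g (P i' j')) = {}"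
    if "i < j \<and> j < t \<and> i' < j' \<and> j' < t \<and> (i, j) \<noteq> (i', j')" for i j i' j'
  proof -
    have d: "pe (P i j) \<inter> pe (P i' j') = {}" using I that unfolding toi_immersion_def pe_nth by blast
    have "inj (\<lambda>e. ?g ` e)" using ig by (simp add: inj_image_eq_iff inj_def)
    then show ?thesis unfolding pe_nth pe_map using d by (metis image_Int image_empty)
  qed
  show ?thesis unfolding toi_immersion_def using c1 c2 c3 c4 by blast
qed



lemma complete_imm: "toi_immersion (complete_graph n) n id (\<lambda>i j. [i, j])"
proof -
  have e: "{i, j} \<in> edges (complete_graph n)" if "i < j" "j < n" for i j
    using that unfolding complete_graph_def edges_def by fastforce
  have v: "verts (complete_graph n) = {..<n}" by (simp add: complete_graph_def verts_def)
  have p: "is_path (complete_graph n) [i, j]" if "i < j" "j < n" for i j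
    using e[OF that] that v by (simp add: is_path_rec)
  have d: "path_edges [i, j] \<inter> path_edges [i', j'] = {}"
    if "i < j \<and> j < n \<and> i' < j' \<and> j' < n \<and> (i, j) \<noteq> (i', j')" for i j i' j'
    using that unfolding pe_nth by (auto simp: doubleton_eq_iff)
  show ?thesis unfolding toi_immersion_def
    using p d v by (simp add: odd_path_def interior_def)
qed

abbreviation "KP \<equiv> cart_prod (complete_graph 3) (complete_graph 2)"

definition adjP :: "nat \<times> nat \<Rightarrow> nat \<times> nat \<Rightarrow> bool" where
  "adjP x y \<longleftrightarrow> fst x < 3 \<and> snd x < 2 \<and> fst y < 3 \<and> snd y < 2 \<and>
     ((fst x = fst y \<and> snd x \<noteq> snd y) \<or> (snd x = snd y \<and> fst x \<noteq> fst y))"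

lemma KP_edge: "{x, y} \<in> edges KP \<Longrightarrow> adjP x y"
  unfolding cart_prod_def complete_graph_def edges_def verts_def adjP_def
  by (auto simp: doubleton_eq_iff)

lemma KP_edges: "edges KP \<subseteq> set [{(0,0),(1,0)}, {(0,0),(2,0)}, {(1,0),(2,0)}, {(0,1),(1,1)},
   {(0,1),(2,1)}, {(1,1),(2,1)}, {(0,0),(0,1)}, {(1,0),(1,1)}, {(2,0),(2,1)}]"
proof
  fix e assume e: "e \<in> edges KP"
  then obtain x y where xy: "e = {x, y}" unfolding cart_prod_def edges_def by auto
  then have "adjP x y" using KP_edge e by simp
  then obtain a b c d where x: "x = (a, b)" "y = (c, d)" and r: "a < 3" "b < 2" "c < 3" "d < 2"
    "(a = c \<and> b \<noteq> d) \<or> (b = d \<and> a \<noteq> c)"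
    unfolding adjP_def by (cases x, cases y) auto
  have "a = 0 \<or> a = 1 \<or> a = 2" "c = 0 \<or> c = 1 \<or> c = 2" "b = 0 \<or> b = 1" "d = 0 \<or> d = 1"
    using r by auto
  then show "e \<in> set [{(0,0),(1,0)}, {(0,0),(2,0)}, {(1,0),(2,0)}, {(0,1),(1,1)},
   {(0,1),(2,1)}, {(1,1),(2,1)}, {(0,0),(0,1)}, {(1,0),(1,1)}, {(2,0),(2,1)}]"
    using r(5) unfolding xy x by (elim disjE) (simp_all add: insert_commute)
qed

lemma KP_card: "card (edges KP) \<le> 9"
proof -
  have "card (edges KP) \<le> card (set [{(0::nat,0::nat),(1,0)}, {(0,0),(2,0)}, {(1,0),(2,0)}, {(0,1),(1,1)},
   {(0,1),(2,1)}, {(1,1),(2,1)}, {(0,0),(0,1)}, {(1,0),(1,1)}, {(2,0),(2,1)}])"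
    by (rule card_mono[OF _ KP_edges]) simp
  also have "\<dots> \<le> 9" by (rule order_trans[OF card_length]) simp
  finally show ?thesis .
qed

lemma tri: "adjP a b \<Longrightarrow> adjP b c \<Longrightarrow> adjP a c \<Longrightarrow> snd a = snd b \<and> snd a = snd c"
  unfolding adjP_def by auto

lemma no_K4e: "adjP a b \<Longrightarrow> adjP a c \<Longrightarrow> adjP b c \<Longrightarrow> adjP a d \<Longrightarrow> adjP b d \<Longrightarrow> c \<noteq> d \<Longrightarrow> False"
proof -
  assume h: "adjP a b" "adjP a c" "adjP b c" "adjP a d" "adjP b d" "c \<noteq> d"
  have "snd a = snd b \<and> snd a = snd c" using tri h by blast
  moreover have "snd a = snd d" using tri[of a b d] h by blast
  ultimately have s: "snd c = snd d" by simp
  have f: "fst a \<noteq> fst b" "fst a \<noteq> fst c" "fst b \<noteq> fst c" "fst a \<noteq> fst d" "fst b \<noteq> fst d"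
    "fst a < 3" "fst b < 3" "fst c < 3" "fst d < 3"
    using h \<open>snd a = snd b \<and> snd a = snd c\<close> \<open>snd a = snd d\<close> unfolding adjP_def by auto
  then have "fst c = fst d" by linarith
  then show False using s h(6) by (simp add: prod_eq_iff)
qed

lemma adjP_sym: "adjP a b \<Longrightarrow> adjP b a"
  unfolding adjP_def by (metis (no_types))

lemma card6: "finite A \<Longrightarrow> finite B \<Longrightarrow> finite C \<Longrightarrow> finite D \<Longrightarrow> finite E \<Longrightarrow> finite F \<Longrightarrow>
  A \<inter> B = {} \<Longrightarrow> A \<inter> C = {} \<Longrightarrow> A \<inter> D = {} \<Longrightarrow> A \<inter> E = {} \<Longrightarrow> A \<inter> F = {} \<Longrightarrow>
  B \<inter> C = {} \<Longrightarrow> B \<inter> D = {} \<Longrightarrow> B \<inter> E = {} \<Longrightarrow> B \<inter> F = {} \<Longrightarrow>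
  C \<inter> D = {} \<Longrightarrow> C \<inter> E = {} \<Longrightarrow> C \<inter> F = {} \<Longrightarrow>
  D \<inter> E = {} \<Longrightarrow> D \<inter> F = {} \<Longrightarrow> E \<inter> F = {} \<Longrightarrow>
  card (A \<union> B \<union> C \<union> D \<union> E \<union> F) = card A + card B + card C + card D + card E + card F"
proof -
  assume a: "finite A" "finite B" "finite C" "finite D" "finite E" "finite F"
   "A \<inter> B = {}" "A \<inter> C = {}" "A \<inter> D = {}" "A \<inter> E = {}" "A \<inter> F = {}"
   "B \<inter> C = {}" "B \<inter> D = {}" "B \<inter> E = {}" "B \<inter> F = {}"
   "C \<inter> D = {}" "C \<inter> E = {}" "C \<inter> F = {}" "D \<inter> E = {}" "D \<inter> F = {}" "E \<inter> F = {}"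
  have 1: "card (A \<union> B) = card A + card B" using a by (simp add: card_Un_disjoint)
  have 2: "card (A \<union> B \<union> C) = card (A \<union> B) + card C" using a by (intro card_Un_disjoint) auto
  have 3: "card (A \<union> B \<union> C \<union> D) = card (A \<union> B \<union> C) + card D" using a by (intro card_Un_disjoint) auto
  have 4: "card (A \<union> B \<union> C \<union> D \<union> E) = card (A \<union> B \<union> C \<union> D) + card E" using a by (intro card_Un_disjoint) auto
  have 5: "card (A \<union> B \<union> C \<union> D \<union> E \<union> F) = card (A \<union> B \<union> C \<union> D \<union> E) + card F" using a by (intro card_Un_disjoint) auto
  show ?thesis using 1 2 3 4 5 by simp
qed

lemma len2_edge: "is_path G p \<Longrightarrow> card (pe p) = 1 \<Longrightarrow> {hd p, last p} \<in> edges G"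
proof -
  assume p: "is_path G p" "card (pe p) = 1"
  then have "length p = 2" using pe_card[of p] by (auto simp: is_path_def)
  then obtain a b where "p = [a, b]"
    by (metis One_nat_def Suc_1 length_0_conv length_Suc_conv)
  then show ?thesis using p by (auto simp: is_path_rec)
qed


lemma KP_fin: "finite (edges KP)"
  using KP_edges finite_subset by blast

lemma KP_no4: "\<not> toi_immersion KP 4 f P"
proof
  assume I: "toi_immersion KP 4 f P"
  define c where "c i j = card (pe (P i j))" for i j
  have pp: "is_path KP (P i j) \<and> hd (P i j) = f i \<and> last (P i j) = f j \<and> odd (c i j)
      \<and> pe (P i j) \<subseteq> edges KP" if "i < j" "j < 4" for i j
  proof -
    have "is_path KP (P i j)" "hd (P i j) = f i" "last (P i j) = f j" "odd_path (P i j)"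
      using I that unfolding toi_immersion_def by auto
    then show ?thesis unfolding c_def odd_path_def
      using pe_edges[of KP "P i j"] by (auto simp: is_path_rec pe_card)
  qed
  have dj: "pe (P i j) \<inter> pe (P i' j') = {}"
    if "i < j" "j < 4" "i' < j'" "j' < 4" "(i, j) \<noteq> (i', j')" for i j i' j'
    using I that unfolding toi_immersion_def pe_nth by blast
  have adj: "adjP (f i) (f j)" if "i < j" "j < 4" "c i j = 1" for i j
    using pp[OF that(1,2)] len2_edge[of KP "P i j"] that(3) KP_edge unfolding c_def by metis
  have inj: "inj_on f {..<4}" using I unfolding toi_immersion_def by blast
  have "card (pe (P 0 1) \<union> pe (P 0 2) \<union> pe (P 0 3) \<union> pe (P 1 2) \<union> pe (P 1 3) \<union> pe (P 2 3))
     = c 0 1 + c 0 2 + c 0 3 + c 1 2 + c 1 3 + c 2 3"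
    unfolding c_def by (rule card6) (simp_all add: pe_finite dj)
  moreover have "card (pe (P 0 1) \<union> pe (P 0 2) \<union> pe (P 0 3) \<union> pe (P 1 2) \<union> pe (P 1 3) \<union> pe (P 2 3))
     \<le> 9"
    by (rule order_trans[OF card_mono[OF KP_fin] KP_card]) (use pp in auto)
  ultimately have sum: "c 0 1 + c 0 2 + c 0 3 + c 1 2 + c 1 3 + c 2 3 \<le> 9" by simp
  have od: "odd (c 0 1)" "odd (c 0 2)" "odd (c 0 3)" "odd (c 1 2)" "odd (c 1 3)" "odd (c 2 3)"
    using pp by auto
  have ge: "c 0 1 \<noteq> 1 \<Longrightarrow> c 0 1 \<ge> 3" "c 0 2 \<noteq> 1 \<Longrightarrow> c 0 2 \<ge> 3" "c 0 3 \<noteq> 1 \<Longrightarrow> c 0 3 \<ge> 3"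
     "c 1 2 \<noteq> 1 \<Longrightarrow> c 1 2 \<ge> 3" "c 1 3 \<noteq> 1 \<Longrightarrow> c 1 3 \<ge> 3" "c 2 3 \<noteq> 1 \<Longrightarrow> c 2 3 \<ge> 3"
    using od by (auto elim!: oddE)
  have ge1: "c 0 1 \<ge> 1" "c 0 2 \<ge> 1" "c 0 3 \<ge> 1" "c 1 2 \<ge> 1" "c 1 3 \<ge> 1" "c 2 3 \<ge> 1"
    using od by (auto elim!: oddE)
  have d: "f 0 \<noteq> f 1" "f 0 \<noteq> f 2" "f 0 \<noteq> f 3" "f 1 \<noteq> f 2" "f 1 \<noteq> f 3" "f 2 \<noteq> f 3"
    using inj unfolding inj_on_def by (auto simp: numeral_eq_Suc)
  have nc0: "c 0 1 = 1"
  proof (rule ccontr)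
    assume n: "c 0 1 \<noteq> 1"
    have e: "c 0 2 = 1" "c 0 3 = 1" "c 1 2 = 1" "c 1 3 = 1" "c 2 3 = 1"
      using n sum ge ge1 by linarith+
    have "adjP (f 2) (f 3)" using adj[of 2 3] adjP_sym e by simp
    moreover
    have "adjP (f 2) (f 0)" using adj[of 0 2] adjP_sym e by simp
    moreover
    have "adjP (f 3) (f 0)" using adj[of 0 3] adjP_sym e by simp
    moreover
    have "adjP (f 2) (f 1)" using adj[of 1 2] adjP_sym e by simp
    moreover
    have "adjP (f 3) (f 1)" using adj[of 1 3] adjP_sym e by simp
    moreover
    have "f 0 \<noteq> f 1" using d by simp
    ultimately show False using no_K4e by blast
  qed
  have nc1: "c 0 2 = 1"
  proof (rule ccontr)
    assume n: "c 0 2 \<noteq> 1"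
    have e: "c 0 1 = 1" "c 0 3 = 1" "c 1 2 = 1" "c 1 3 = 1" "c 2 3 = 1"
      using n sum ge ge1 by linarith+
    have "adjP (f 1) (f 3)" using adj[of 1 3] adjP_sym e by simp
    moreover
    have "adjP (f 1) (f 0)" using adj[of 0 1] adjP_sym e by simp
    moreover
    have "adjP (f 3) (f 0)" using adj[of 0 3] adjP_sym e by simp
    moreover
    have "adjP (f 1) (f 2)" using adj[of 1 2] adjP_sym e by simp
    moreover
    have "adjP (f 3) (f 2)" using adj[of 2 3] adjP_sym e by simp
    moreover
    have "f 0 \<noteq> f 2" using d by simp
    ultimately show False using no_K4e by blast
  qed
  have nc2: "c 0 3 = 1"
  proof (rule ccontr)
    assume n: "c 0 3 \<noteq> 1"
    have e: "c 0 1 = 1" "c 0 2 = 1" "c 1 2 = 1" "c 1 3 = 1" "c 2 3 = 1"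
      using n sum ge ge1 by linarith+
    have "adjP (f 1) (f 2)" using adj[of 1 2] adjP_sym e by simp
    moreover
    have "adjP (f 1) (f 0)" using adj[of 0 1] adjP_sym e by simp
    moreover
    have "adjP (f 2) (f 0)" using adj[of 0 2] adjP_sym e by simp
    moreover
    have "adjP (f 1) (f 3)" using adj[of 1 3] adjP_sym e by simp
    moreover
    have "adjP (f 2) (f 3)" using adj[of 2 3] adjP_sym e by simp
    moreover
    have "f 0 \<noteq> f 3" using d by simp
    ultimately show False using no_K4e by blast
  qed
  have nc3: "c 1 2 = 1"
  proof (rule ccontr)
    assume n: "c 1 2 \<noteq> 1"
    have e: "c 0 1 = 1" "c 0 2 = 1" "c 0 3 = 1" "c 1 3 = 1" "c 2 3 = 1"
      using n sum ge ge1 by linarith+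
    have "adjP (f 0) (f 3)" using adj[of 0 3] adjP_sym e by simp
    moreover
    have "adjP (f 0) (f 1)" using adj[of 0 1] adjP_sym e by simp
    moreover
    have "adjP (f 3) (f 1)" using adj[of 1 3] adjP_sym e by simp
    moreover
    have "adjP (f 0) (f 2)" using adj[of 0 2] adjP_sym e by simp
    moreover
    have "adjP (f 3) (f 2)" using adj[of 2 3] adjP_sym e by simp
    moreover
    have "f 1 \<noteq> f 2" using d by simp
    ultimately show False using no_K4e by blast
  qed
  have nc4: "c 1 3 = 1"
  proof (rule ccontr)
    assume n: "c 1 3 \<noteq> 1"
    have e: "c 0 1 = 1" "c 0 2 = 1" "c 0 3 = 1" "c 1 2 = 1" "c 2 3 = 1"
      using n sum ge ge1 by linarith+
    have "adjP (f 0) (f 2)" using adj[of 0 2] adjP_sym e by simp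
    moreover
    have "adjP (f 0) (f 1)" using adj[of 0 1] adjP_sym e by simp
    moreover
    have "adjP (f 2) (f 1)" using adj[of 1 2] adjP_sym e by simp
    moreover
    have "adjP (f 0) (f 3)" using adj[of 0 3] adjP_sym e by simp
    moreover
    have "adjP (f 2) (f 3)" using adj[of 2 3] adjP_sym e by simp
    moreover
    have "f 1 \<noteq> f 3" using d by simp
    ultimately show False using no_K4e by blast
  qed
  have nc5: "c 2 3 = 1"
  proof (rule ccontr)
    assume n: "c 2 3 \<noteq> 1"
    have e: "c 0 1 = 1" "c 0 2 = 1" "c 0 3 = 1" "c 1 2 = 1" "c 1 3 = 1"
      using n sum ge ge1 by linarith+
    have "adjP (f 0) (f 1)" using adj[of 0 1] adjP_sym e by simp
    moreover
    have "adjP (f 0) (f 2)" using adj[of 0 2] adjP_sym e by simp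
    moreover
    have "adjP (f 1) (f 2)" using adj[of 1 2] adjP_sym e by simp
    moreover
    have "adjP (f 0) (f 3)" using adj[of 0 3] adjP_sym e by simp
    moreover
    have "adjP (f 1) (f 3)" using adj[of 1 3] adjP_sym e by simp
    moreover
    have "f 2 \<noteq> f 3" using d by simp
    ultimately show False using no_K4e by blast
  qed
  have e: "c 0 1 = 1" "c 0 2 = 1" "c 0 3 = 1" "c 1 2 = 1" "c 1 3 = 1" "c 2 3 = 1"
    using nc0 nc1 nc2 nc3 nc4 nc5 by auto
  show False
  proof -
    have "adjP (f 2) (f 3)" using adj[of 2 3] adjP_sym e by simp
    moreover
    have "adjP (f 2) (f 0)" using adj[of 0 2] adjP_sym e by simp
    moreover
    have "adjP (f 3) (f 0)" using adj[of 0 3] adjP_sym e by simp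
    moreover
    have "adjP (f 2) (f 1)" using adj[of 1 2] adjP_sym e by simp
    moreover
    have "adjP (f 3) (f 1)" using adj[of 1 3] adjP_sym e by simp
    moreover
    have "f 0 \<noteq> f 1" using d by simp
    ultimately show False using no_K4e by blast
  qed
qed

lemma toi_KP: "toi KP = 3"
proof -
  have fin: "finite (verts KP)" unfolding cp_verts by (simp add: complete_graph_def verts_def)
  have "has_toi (complete_graph 3) 3" using complete_imm has_toi_def by blast
  then obtain f P where "toi_immersion (complete_graph 3) 3 f P" using has_toi_def by blast
  moreover have "(0::nat) \<in> verts (complete_graph 2)" by (simp add: complete_graph_def verts_def)
  ultimately have "toi_immersion KP 3 (\<lambda>i. (f i, 0::nat)) (\<lambda>i j. map (\<lambda>y. (y, 0::nat)) (P i j))"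
    by (rule layer_imm)
  then have "has_toi KP 3" unfolding has_toi_def by blast
  then have "3 \<le> toi KP" using toi_ge[OF fin] by blast
  moreover have "toi KP < 4"
  proof (rule ccontr)
    assume "\<not> toi KP < 4"
    then have "4 \<le> toi KP" by simp
    moreover have "has_toi KP (toi KP)" using toi_has[OF fin] .
    ultimately have "has_toi KP 4" by (rule has_toi_mono[rotated])
    then show False using KP_no4 has_toi_def by blast
  qed
  ultimately show ?thesis by simp
qed



definition cw :: "'a graph \<Rightarrow> (nat \<Rightarrow> 'a) \<Rightarrow> nat \<Rightarrow> bool" where
  "cw G w n \<longleftrightarrow> (\<forall>k<n. {w k, w (Suc k)} \<in> edges G) \<and> w 0 = w n"

definition oddcyc :: "'a graph \<Rightarrow> 'a \<Rightarrow> 'a \<Rightarrow> 'a \<Rightarrow> 'a list \<Rightarrow> bool" where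
  "oddcyc G x0 x1 x2 R \<longleftrightarrow> {x0, x1} \<in> edges G \<and> {x0, x2} \<in> edges G \<and> is_path G R \<and>
     hd R = x1 \<and> last R = x2 \<and> odd_path R \<and> x0 \<notin> set R"

lemma edge_verts: "wf_graph G \<Longrightarrow> {a, b} \<in> edges G \<Longrightarrow> a \<in> verts G \<and> b \<in> verts G \<and> a \<noteq> b"
proof -
  assume "wf_graph G" "{a, b} \<in> edges G"
  then have "{a, b} \<subseteq> verts G" "card {a, b} = 2" unfolding wf_graph_def by auto
  moreover have "a \<noteq> b" using \<open>card {a, b} = 2\<close> by (cases "a = b") auto
  ultimately show ?thesis by simp
qed

lemma odd_cw: "wf_graph G \<Longrightarrow> cw G w n \<Longrightarrow> odd n \<Longrightarrow> \<exists>x0 x1 x2 R. oddcyc G x0 x1 x2 R"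
proof (induction n arbitrary: w rule: less_induct)
  case (less n)
  note wf = less.prems(1) and c = less.prems(2) and o = less.prems(3)
  have E: "{w k, w (Suc k)} \<in> edges G" if "k < n" for k using c that unfolding cw_def by blast
  have cl: "w 0 = w n" using c unfolding cw_def by blast
  show ?case
  proof (cases "inj_on w {..<n}")
    case True
    have "n \<noteq> 1"
    proof
      assume "n = 1"
      then have "{w 0, w 0} \<in> edges G" using E[of 0] cl by simp
      then show False using edge_verts[OF wf] by blast
    qed
    then have n3: "n \<ge> 3" using o by presburger
    define R where "R = map w [1..<n]"
    have vw: "w k \<in> verts G" if "k < n" for k using E[OF that] edge_verts[OF wf] by blast
    have "{w 0, w 1} \<in> edges G" using E[of 0] n3 by simp
    moreover have "{w 0, w (n - 1)} \<in> edges G" using E[of "n - 1"] n3 cl by (simp add: insert_commute)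
    moreover have "is_path G R"
      unfolding is_path_rec wk_nth
    proof (intro conjI allI impI)
      show "R \<noteq> []" using n3 R_def by simp
      show "distinct R" unfolding R_def using True
        by (simp add: distinct_map) (rule inj_on_subset, auto)
      show "set R \<subseteq> verts G" unfolding R_def using vw by auto
      fix i assume "Suc i < length R"
      then show "{R ! i, R ! Suc i} \<in> edges G" unfolding R_def using E[of "Suc i"] by simp
    qed
    moreover have "hd R = w 1" "last R = w (n - 1)" using n3 unfolding R_def
      by (simp_all add: hd_map last_map)
    moreover have "odd_path R" unfolding R_def odd_path_def using o n3 by simp
    moreover have "w 0 \<notin> set R"
    proof
      assume "w 0 \<in> set R"
      then obtain k where k: "1 \<le> k" "k < n" "w 0 = w k" unfolding R_def by auto
      then have "0 = k" using inj_onD[OF True k(3)] n3 by simp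
      then show False using k by simp
    qed
    ultimately show ?thesis unfolding oddcyc_def by blast
  next
    case False
    then obtain i j where ij: "i < j" "j < n" "w i = w j"
      unfolding inj_on_def by (metis lessThan_iff linorder_neqE_nat)
    define m where "m = j - i"
    show ?thesis
    proof (cases "odd m")
      case True
      have "cw G (\<lambda>k. w (i + k)) m" unfolding cw_def m_def
        using E ij by (auto simp: add_Suc_right)
      moreover have "m < n" using ij m_def by simp
      ultimately show ?thesis using less.IH wf True by blast
    next
      case False
      define w2 where "w2 k = (if k \<le> i then w k else w (k + m))" for k
      have "cw G w2 (n - m)" unfolding cw_def
      proof (intro conjI allI impI)
        fix k assume k: "k < n - m"
        show "{w2 k, w2 (Suc k)} \<in> edges G"
        proof (cases "k < i")
          case True then show ?thesis unfolding w2_def using E[of k] ij by simp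
        next
          case F: False
          show ?thesis
          proof (cases "k = i")
            case True
            then show ?thesis unfolding w2_def using E[of j] ij m_def by simp
          next
            case False
            then show ?thesis unfolding w2_def using E[of "k + m"] F k m_def ij by simp
          qed
        qed
      next
        show "w2 0 = w2 (n - m)" unfolding w2_def using cl ij m_def by simp
      qed
      moreover have "n - m < n" "odd (n - m)" using ij m_def False o by auto
      ultimately show ?thesis using less.IH wf by blast
    qed
  qed
qed


lemma wk_join: "wk G xs \<Longrightarrow> wk G ys \<Longrightarrow> xs \<noteq> [] \<Longrightarrow> ys \<noteq> [] \<Longrightarrow> last xs = hd ys \<Longrightarrow>
   wk G (xs @ tl ys) \<and> last (xs @ tl ys) = last ys \<and> hd (xs @ tl ys) = hd xs \<and>
   length (xs @ tl ys) = length xs + length ys - 1 \<and> xs @ tl ys \<noteq> []"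
proof -
  assume a: "wk G xs" "wk G ys" "xs \<noteq> []" "ys \<noteq> []" "last xs = hd ys"
  obtain y ys' where y: "ys = y # ys'" using a(4) by (cases ys) auto
  show ?thesis
  proof (cases "ys' = []")
    case True then show ?thesis using a y by simp
  next
    case False
    have "wk G (xs @ ys')" using a y False by (subst wk_append) (auto simp: wk_Cons)
    then show ?thesis using a y False by simp
  qed
qed

lemma toi3_oddcyc: assumes wf: "wf_graph G" and h: "has_toi G 3"
  shows "\<exists>x0 x1 x2 R. oddcyc G x0 x1 x2 R"
proof -
  obtain f P where I: "toi_immersion G 3 f P" using h has_toi_def by blast
  have pp: "is_path G (P i j) \<and> hd (P i j) = f i \<and> last (P i j) = f j \<and> odd_path (P i j)"
    if "i < j" "j < 3" for i j using I that unfolding toi_immersion_def by blast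
  define A where "A = P 0 1"
  define B where "B = P 1 2"
  define C where "C = rev (P 0 2)"
  have pA: "wk G A" "A \<noteq> []" "hd A = f 0" "last A = f 1" "odd (length A - 1)"
    using pp[of 0 1] unfolding A_def is_path_rec odd_path_def by auto
  have pB: "wk G B" "B \<noteq> []" "hd B = f 1" "last B = f 2" "odd (length B - 1)"
    using pp[of 1 2] unfolding B_def is_path_rec odd_path_def by auto
  have pC: "wk G C" "C \<noteq> []" "hd C = f 2" "last C = f 0" "odd (length C - 1)"
    using pp[of 0 2] unfolding C_def is_path_rec odd_path_def by (auto simp: wk_rev hd_rev last_rev)
  define AB where "AB = A @ tl B"
  have jAB: "wk G AB" "last AB = f 2" "hd AB = f 0" "length AB = length A + length B - 1" "AB \<noteq> []"
    using wk_join[of G A B] pA pB unfolding AB_def by auto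
  define W where "W = AB @ tl C"
  have jW: "wk G W" "last W = f 0" "hd W = f 0" "length W = length AB + length C - 1" "W \<noteq> []"
    using wk_join[of G AB C] jAB pC unfolding W_def by auto
  have "cw G (\<lambda>k. W ! k) (length W - 1)"
    unfolding cw_def using jW wk_nth[of G W]
    by (auto simp: hd_conv_nth last_conv_nth)
  moreover have "odd (length W - 1)"
  proof -
    obtain a where a: "length A - 1 = 2 * a + 1" by (rule oddE[OF pA(5)])
    obtain b where b: "length B - 1 = 2 * b + 1" by (rule oddE[OF pB(5)])
    obtain c where c: "length C - 1 = 2 * c + 1" by (rule oddE[OF pC(5)])
    have la: "length A = 2 * a + 2" using a by linarith
    have lb: "length B = 2 * b + 2" using b by linarith
    have lc: "length C = 2 * c + 2" using c by linarith
    have "length AB = 2 * a + 2 * b + 3" using jAB(4) la lb by simp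
    then have "length W = 2 * a + 2 * b + 2 * c + 4" using jW(4) lc by simp
    then have "length W - 1 = 2 * (a + b + c + 1) + 1" by simp
    then show ?thesis by simp
  qed
  ultimately show ?thesis using odd_cw[OF wf] by blast
qed



lemma walk_P3: "wk H p \<Longrightarrow> p \<noteq> [] \<Longrightarrow> hd p \<noteq> a \<Longrightarrow> hd p \<noteq> b \<Longrightarrow> last p = a \<Longrightarrow> {a, b} \<in> edges H \<Longrightarrow>
  \<exists>u v w. {u, v} \<in> edges H \<and> {v, w} \<in> edges H \<and> u \<noteq> w"
proof (induction p)
  case Nil then show ?case by simp
next
  case (Cons x p')
  show ?case
  proof (cases p')
    case Nil then show ?thesis using Cons by simp
  next
    case (Cons y p'')
    then have xy: "{x, y} \<in> edges H" using Cons.prems(1) by simp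
    show ?thesis
    proof (cases "y = a")
      case True then show ?thesis using xy Cons.prems by auto
    next
      case F: False
      show ?thesis
      proof (cases "y = b")
        case True then show ?thesis using xy Cons.prems by (metis insert_commute list.sel(1))
      next
        case False
        then show ?thesis using Cons.IH Cons.prems Cons F by (auto simp: wk_Cons)
      qed
    qed
  qed
qed

lemma H_P3:
  assumes wf: "wf_graph H" and con: "connected_graph H" and h2: "has_toi H 2"
    and ni: "\<not> graph_iso H (complete_graph 2)"
  shows "\<exists>u v w. {u, v} \<in> edges H \<and> {v, w} \<in> edges H \<and> u \<noteq> w"
proof -
  obtain f P where I: "toi_immersion H 2 f P" using h2 has_toi_def by blast
  have p: "is_path H (P 0 1)" "hd (P 0 1) = f 0" "last (P 0 1) = f 1"
    using I unfolding toi_immersion_def by auto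
  have "f 0 \<noteq> f 1" using I unfolding toi_immersion_def inj_on_def by fastforce
  then obtain a b rest where ab: "P 0 1 = a # b # rest"
    using p by (cases "P 0 1" rule: pe.cases) (auto simp: is_path_def)
  then have e: "{a, b} \<in> edges H" using p(1) by (simp add: is_path_rec)
  have av: "a \<in> verts H" "b \<in> verts H" "a \<noteq> b" using edge_verts[OF wf e] by auto
  show ?thesis
  proof (cases "verts H = {a, b}")
    case True
    define g where "g x = (if x = a then 0 else 1::nat)" for x
    have vk: "verts (complete_graph 2) = {0, 1::nat}" unfolding complete_graph_def verts_def by auto
    have "bij_betw g (verts H) (verts (complete_graph 2))"
      unfolding True vk bij_betw_def inj_on_def g_def using av by auto
    moreover have "\<forall>u\<in>verts H. \<forall>v\<in>verts H. {u, v} \<in> edges H \<longleftrightarrow> {g u, g v} \<in> edges (complete_graph 2)"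
    proof (intro ballI)
      fix u v assume uv: "u \<in> verts H" "v \<in> verts H"
      show "{u, v} \<in> edges H \<longleftrightarrow> {g u, g v} \<in> edges (complete_graph 2)"
      proof (cases "u = v")
        case True
        have "{u, u} \<notin> edges H" using edge_verts[OF wf, of u u] by auto
        moreover have "{g u, g u} \<notin> edges (complete_graph 2)"
          unfolding complete_graph_def edges_def by (auto simp: doubleton_eq_iff)
        ultimately show ?thesis using True by simp
      next
        case False
        then have "{u, v} = {a, b}" "{g u, g v} = {0, 1}" using uv True av unfolding g_def by auto
        moreover have "{0::nat, 1} \<in> edges (complete_graph 2)"
          unfolding complete_graph_def edges_def by force
        ultimately show ?thesis using e by simp
      qed
    qed
    ultimately have "graph_iso H (complete_graph 2)" unfolding graph_iso_def by blast
    then show ?thesis using ni by blast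
  next
    case False
    then obtain c where c: "c \<in> verts H" "c \<noteq> a" "c \<noteq> b" using av by blast
    obtain q where q: "is_path H q" "hd q = c" "last q = a"
      using con c(1) av(1) unfolding connected_graph_def by blast
    show ?thesis using walk_P3[of H q a b] q c e by (auto simp: is_path_rec)
  qed
qed



lemma pairs4: "i < j \<Longrightarrow> j < (4::nat) \<Longrightarrow>
  (i = 0 \<and> j = 1) \<or> (i = 0 \<and> j = 2) \<or> (i = 0 \<and> j = 3) \<or> (i = 1 \<and> j = 2) \<or> (i = 1 \<and> j = 3) \<or> (i = 2 \<and> j = 3)"
  by arith

lemma all4: "(\<forall>k<(4::nat). Q k) \<longleftrightarrow> Q 0 \<and> Q 1 \<and> Q 2 \<and> Q 3"
  by (auto simp: less_Suc_eq numeral_eq_Suc)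

lemma interior_sub: "interior p \<subseteq> set p"
  unfolding interior_def by (cases p) (auto dest: in_set_butlastD)

lemma term_ok: "distinct p \<Longrightarrow> x = hd p \<or> x = last p \<or> x \<notin> set p \<Longrightarrow> x \<notin> interior p"
  using interior_distinct[of p] interior_sub[of p] by blast

definition RS :: "'a list \<Rightarrow> 'b \<Rightarrow> ('a \<times> 'b) set set" where
  "RS R h = {{(a, h), (b, h)} | a b. a \<in> set R \<and> b \<in> set R}"

lemma pe_L: "pe (map (\<lambda>y. (y, h)) R) \<subseteq> RS R h" "pe (map (\<lambda>y. (y, h)) (rev R)) \<subseteq> RS R h"
  unfolding pe_map pe_rev RS_def by (auto dest!: pe_sub)


lemma constr:
  assumes wfG: "wf_graph G" and wfH: "wf_graph H" and oc: "oddcyc G x0 x1 x2 R"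
    and uv: "{u, v} \<in> edges H" and vw: "{v, w} \<in> edges H" and uw: "u \<noteq> w"
  shows "has_toi (cart_prod G H) 4"
proof -
  let ?K = "cart_prod G H"
  let ?L = "\<lambda>h xs. map (\<lambda>y. (y, h)) xs"
  have e01: "{x0, x1} \<in> edges G" and e02: "{x0, x2} \<in> edges G" and pR: "is_path G R"
    and hR: "hd R = x1" and lR: "last R = x2" and oR: "odd_path R" and x0R: "x0 \<notin> set R"
    using oc unfolding oddcyc_def by auto
  have RR: "R \<noteq> []" "distinct R" "set R \<subseteq> verts G" "wk G R" using pR is_path_rec[of G R] by auto
  have lenR: "odd (length R - 1)" using oR odd_path_def by auto
  have x1R: "x1 \<in> set R" "x2 \<in> set R" using RR(1) hR lR by auto
  have "x1 \<noteq> x2"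
  proof
    assume "x1 = x2"
    then have "hd R = last R" using hR lR by simp
    moreover have "length R - 1 \<noteq> 0" using lenR by (metis even_zero)
    then have "length R \<ge> 2" by linarith
    ultimately show False using RR(2) by (cases R rule: pe.cases) (auto split: if_splits)
  qed
  have gv: "x0 \<in> verts G" "x1 \<in> verts G" "x2 \<in> verts G" "x0 \<noteq> x1" "x0 \<noteq> x2"
    using edge_verts[OF wfG e01] edge_verts[OF wfG e02] by auto
  have hv: "u \<in> verts H" "v \<in> verts H" "w \<in> verts H" "u \<noteq> v" "v \<noteq> w"
    using edge_verts[OF wfH uv] edge_verts[OF wfH vw] by auto
  note neq = gv(4,5) \<open>x1 \<noteq> x2\<close> hv(4,5) uw
  define f where "f (i::nat) = [(x0, u), (x1, u), (x1, v), (x2, u)] ! i" for i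
  define P where "P (i::nat) (j::nat) = (if i = 0 \<and> j = 1 then [(x0, u), (x1, u)]
      else if i = 0 \<and> j = 2 then (x0, u) # (x0, v) # ?L v (rev R)
      else if i = 0 \<and> j = 3 then [(x0, u), (x2, u)]
      else if i = 1 \<and> j = 2 then [(x1, u), (x1, v)]
      else if i = 1 \<and> j = 3 then ?L u R
      else [(x1, v), (x0, v), (x0, w), (x2, w), (x2, v), (x2, u)])" for i j
  have f: "f 0 = (x0, u)" "f 1 = (x1, u)" "f 2 = (x1, v)" "f 3 = (x2, u)" by (simp_all add: f_def)
  have P: "P 0 1 = [(x0, u), (x1, u)]" "P 0 2 = (x0, u) # (x0, v) # ?L v (rev R)"
    "P 0 3 = [(x0, u), (x2, u)]" "P 1 2 = [(x1, u), (x1, v)]" "P 1 3 = ?L u R"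
    "P 2 3 = [(x1, v), (x0, v), (x0, w), (x2, w), (x2, v), (x2, u)]" by (simp_all add: P_def)
  have KV: "(a, h) \<in> verts ?K \<longleftrightarrow> a \<in> verts G \<and> h \<in> verts H" for a h by (simp add: cp_verts)
  have wkL: "wk ?K (?L h R)" "wk ?K (?L h (rev R))" if hh: "h \<in> verts H" for h
  proof -
    have hor: "{(a, h), (b, h)} \<in> edges ?K" if "{a, b} \<in> edges G" for a b
      using cp_hor[OF hh that] .
    show 1: "wk ?K (?L h R)" by (rule wk_map[OF hor RR(4)])
    show "wk ?K (?L h (rev R))" using 1 wk_rev[of ?K "?L h R"] by (simp add: rev_map)
  qed
  have setL: "set (?L h R) = (\<lambda>y. (y, h)) ` set R" "set (?L h (rev R)) = (\<lambda>y. (y, h)) ` set R" for h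
    by auto
  have distL: "distinct (?L h R)" "distinct (?L h (rev R))" for h
    using RR(2) by (auto simp: distinct_map inj_on_def)
  have c1: "inj_on f {..<4}"
    unfolding inj_on_def using neq by (auto simp: f_def less_Suc_eq numeral_eq_Suc)
  have c2: "f ` {..<4} \<subseteq> verts ?K"
    using gv hv by (auto simp: f_def less_Suc_eq numeral_eq_Suc cp_verts)
  have Q01: "is_path ?K (P 0 1) \<and> hd (P 0 1) = f 0 \<and> last (P 0 1) = f 1 \<and> odd_path (P 0 1) \<and> (\<forall>k<4. f k \<notin> interior (P 0 1))"
    unfolding P f is_path_rec all4 using gv hv neq cp_hor[OF hv(1) e01]
    by (simp add: KV odd_path_def interior_def)
  have Q03: "is_path ?K (P 0 3) \<and> hd (P 0 3) = f 0 \<and> last (P 0 3) = f 3 \<and> odd_path (P 0 3) \<and> (\<forall>k<4. f k \<notin> interior (P 0 3))"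
    unfolding P f is_path_rec all4 using gv hv neq cp_hor[OF hv(1) e02]
    by (simp add: KV odd_path_def interior_def)
  have Q12: "is_path ?K (P 1 2) \<and> hd (P 1 2) = f 1 \<and> last (P 1 2) = f 2 \<and> odd_path (P 1 2) \<and> (\<forall>k<4. f k \<notin> interior (P 1 2))"
    unfolding P f is_path_rec all4 using gv hv neq cp_vert[OF gv(2) uv]
    by (simp add: KV odd_path_def interior_def)
  have Q23: "is_path ?K (P 2 3) \<and> hd (P 2 3) = f 2 \<and> last (P 2 3) = f 3 \<and> odd_path (P 2 3) \<and> (\<forall>k<4. f k \<notin> interior (P 2 3))"
  proof -
    have "{(x1, v), (x0, v)} \<in> edges ?K" using cp_hor[OF hv(2) e01] by (simp add: insert_commute)
    moreover have "{(x0, v), (x0, w)} \<in> edges ?K" using cp_vert[OF gv(1) vw] .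
    moreover have "{(x0, w), (x2, w)} \<in> edges ?K" using cp_hor[OF hv(3) e02] .
    moreover have "{(x2, w), (x2, v)} \<in> edges ?K" using cp_vert[OF gv(3) vw] by (simp add: insert_commute)
    moreover have "{(x2, v), (x2, u)} \<in> edges ?K" using cp_vert[OF gv(3) uv] by (simp add: insert_commute)
    ultimately show ?thesis
      unfolding P f is_path_rec all4 using gv hv neq
      by (simp add: KV odd_path_def interior_def)
  qed
  have Q13: "is_path ?K (P 1 3) \<and> hd (P 1 3) = f 1 \<and> last (P 1 3) = f 3 \<and> odd_path (P 1 3) \<and> (\<forall>k<4. f k \<notin> interior (P 1 3))"
  proof -
    have ip: "is_path ?K (?L u R)" unfolding is_path_rec using RR(1) distL wkL[OF hv(1)] RR(3) hv(1)
      by (auto simp: KV)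
    have hl: "hd (?L u R) = (x1, u)" "last (?L u R) = (x2, u)" using RR(1) hR lR by (simp_all add: hd_map last_map)
    have "f k \<notin> interior (?L u R)" if "k < 4" for k
    proof (rule term_ok[OF distL(1)])
      show "f k = hd (?L u R) \<or> f k = last (?L u R) \<or> f k \<notin> set (?L u R)"
      proof -
        have "k = 0 \<or> k = 1 \<or> k = 2 \<or> k = 3" using that by arith
        then show ?thesis using hl x0R neq by (elim disjE) (auto simp: f f_def)
      qed
    qed
    then show ?thesis using ip hl lenR unfolding P f odd_path_def by simp
  qed
  have Q02: "is_path ?K (P 0 2) \<and> hd (P 0 2) = f 0 \<and> last (P 0 2) = f 2 \<and> odd_path (P 0 2) \<and> (\<forall>k<4. f k \<notin> interior (P 0 2))"
  proof -
    have hl: "hd (?L v (rev R)) = (x2, v)" "last (?L v (rev R)) = (x1, v)" using RR(1) hR lR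
      by (simp_all add: hd_map last_map hd_rev last_rev)
    have dp: "distinct (P 0 2)" unfolding P using distL(2) x0R neq by auto
    have wk02: "wk ?K (P 0 2)" unfolding P using wkL(2)[OF hv(2)] hl RR(1) cp_vert[OF gv(1) uv] cp_hor[OF hv(2) e02]
      by (simp add: wk_Cons)
    have set02: "set (P 0 2) \<subseteq> verts ?K" unfolding P using gv hv RR(3) by (auto simp: KV)
    have ip: "is_path ?K (P 0 2)" unfolding is_path_rec[of ?K "P 0 2"] using dp wk02 set02 by (simp add: P)
    have hl2: "hd (P 0 2) = (x0, u)" "last (P 0 2) = (x1, v)" using hl RR(1) unfolding P by simp_all
    have "f k \<notin> interior (P 0 2)" if "k < 4" for k
    proof (rule term_ok[OF dp])
      show "f k = hd (P 0 2) \<or> f k = last (P 0 2) \<or> f k \<notin> set (P 0 2)"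
      proof -
        have "k = 0 \<or> k = 1 \<or> k = 2 \<or> k = 3" using that by arith
        then show ?thesis using hl2 x0R neq x1R by (elim disjE) (auto simp: f P f_def)
      qed
    qed
    moreover have "odd_path (P 0 2)" using lenR RR(1) unfolding P odd_path_def by (cases R) auto
    ultimately show ?thesis using ip hl2 f by simp
  qed
  have c3: "is_path ?K (P i j) \<and> hd (P i j) = f i \<and> last (P i j) = f j \<and> odd_path (P i j) \<and>
        (\<forall>k<4. f k \<notin> interior (P i j))" if "i < j \<and> j < 4" for i j
    using pairs4[of i j] that Q01 Q02 Q03 Q12 Q13 Q23 by auto
  have E01: "pe (P 0 1) \<subseteq> {{(x0, u), (x1, u)}}" unfolding P by simp
  have E03: "pe (P 0 3) \<subseteq> {{(x0, u), (x2, u)}}" unfolding P by simp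
  have E12: "pe (P 1 2) \<subseteq> {{(x1, u), (x1, v)}}" unfolding P by simp
  have E23: "pe (P 2 3) \<subseteq> {{(x1, v), (x0, v)}, {(x0, v), (x0, w)}, {(x0, w), (x2, w)}, {(x2, w), (x2, v)}, {(x2, v), (x2, u)}}"
    unfolding P by simp
  have E13: "pe (P 1 3) \<subseteq> RS R u" unfolding P by (rule pe_L(1))
  have E02: "pe (P 0 2) \<subseteq> {{(x0, u), (x0, v)}, {(x0, v), (x2, v)}} \<union> RS R v"
  proof -
    have "pe (P 0 2) = insert {(x0, u), (x0, v)} (insert {(x0, v), (x2, v)} (pe (?L v (rev R))))"
      unfolding P using RR(1) lR by (simp add: pe_Cons hd_map hd_rev)
    then show ?thesis using pe_L(2)[of v R] by auto
  qed
  have RSn1: "{(a, h), (b, h')} \<notin> RS R h''" if "h \<noteq> h''" for a b h h' h''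
    using that unfolding RS_def by (auto simp: doubleton_eq_iff)
  have RSn2: "{(a, h), (b, h')} \<notin> RS R h''" if "h' \<noteq> h''" for a b h h' h''
    using that unfolding RS_def by (auto simp: doubleton_eq_iff)
  have RSx: "{(x0, h), (b, h')} \<notin> RS R h''" "{(b, h'), (x0, h)} \<notin> RS R h''" for b h h' h''
    using x0R unfolding RS_def by (auto simp: doubleton_eq_iff)
  have RSd: "RS R u \<inter> RS R v = {}" "RS R v \<inter> RS R u = {}"
    using hv(4) unfolding RS_def by (auto simp: doubleton_eq_iff)
  have neq': "x1 \<noteq> x0" "x2 \<noteq> x0" "x2 \<noteq> x1" "v \<noteq> u" "w \<noteq> v" "w \<noteq> u" using neq by auto
  have ds: "A \<inter> B = {}" if "A \<subseteq> A'" "B \<subseteq> B'" "A' \<inter> B' = {}" for A B A' B' :: "('a \<times> 'b) set set"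
    using that by blast
  note S = E01 E03 E12 E23 E13 E02
  note simps = insert_disjoint disjoint_insert doubleton_eq_iff RSx RSd RSn1 RSn2 neq neq' Un_Int_distrib Un_Int_distrib2 Int_Un_distrib Int_Un_distrib2
  have D: "pe (P 0 1) \<inter> pe (P 0 2) = {}" "pe (P 0 1) \<inter> pe (P 0 3) = {}" "pe (P 0 1) \<inter> pe (P 1 2) = {}"
     "pe (P 0 1) \<inter> pe (P 1 3) = {}" "pe (P 0 1) \<inter> pe (P 2 3) = {}"
     "pe (P 0 2) \<inter> pe (P 0 3) = {}" "pe (P 0 2) \<inter> pe (P 1 2) = {}"
     "pe (P 0 2) \<inter> pe (P 1 3) = {}" "pe (P 0 2) \<inter> pe (P 2 3) = {}"
     "pe (P 0 3) \<inter> pe (P 1 2) = {}" "pe (P 0 3) \<inter> pe (P 1 3) = {}" "pe (P 0 3) \<inter> pe (P 2 3) = {}"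
     "pe (P 1 2) \<inter> pe (P 1 3) = {}" "pe (P 1 2) \<inter> pe (P 2 3) = {}"
     "pe (P 1 3) \<inter> pe (P 2 3) = {}"
    by (rule ds[OF S(1) S(6)] ds[OF S(1) S(2)] ds[OF S(1) S(3)] ds[OF S(1) S(5)] ds[OF S(1) S(4)]
          ds[OF S(6) S(2)] ds[OF S(6) S(3)] ds[OF S(6) S(5)] ds[OF S(6) S(4)]
          ds[OF S(2) S(3)] ds[OF S(2) S(5)] ds[OF S(2) S(4)]
          ds[OF S(3) S(5)] ds[OF S(3) S(4)] ds[OF S(5) S(4)]; simp add: simps)+
  have c4: "path_edges (P i j) \<inter> path_edges (P i' j') = {}"
    if "i < j \<and> j < 4 \<and> i' < j' \<and> j' < 4 \<and> (i, j) \<noteq> (i', j')" for i j i' j'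
    unfolding pe_nth using pairs4[of i j] pairs4[of i' j'] that D by (auto simp: Int_commute)
  have "toi_immersion ?K 4 f P" unfolding toi_immersion_def using c1 c2 c3 c4 by blast
  then show ?thesis unfolding has_toi_def by blast
qed


theorem mainTheorem7:
  fixes G :: "'a graph" and H :: "'b graph"
  assumes "wf_graph G" and "wf_graph H"
    and "connected_graph G" and "connected_graph H"
    and "toi G = 3" and "toi H = 2"
  shows "toi (cart_prod G H) \<ge> 3
     \<and> toi (cart_prod (complete_graph 3) (complete_graph 2)) = 3
     \<and> (\<not> graph_iso H (complete_graph 2) \<longrightarrow> toi (cart_prod G H) \<ge> 4)"
proof -
  have finG: "finite (verts G)" and finH: "finite (verts H)"
    using assms(1,2) unfolding wf_graph_def by auto
  have finK: "finite (verts (cart_prod G H))" unfolding cp_verts using finG finH by simp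
  have g3: "has_toi G 3" using toi_has[OF finG] assms(5) by simp
  have h2: "has_toi H 2" using toi_has[OF finH] assms(6) by simp
  obtain h where h: "h \<in> verts H" using assms(4) unfolding connected_graph_def by blast
  obtain f P where I: "toi_immersion G 3 f P" using g3 has_toi_def by blast
  have "toi_immersion (cart_prod G H) 3 (\<lambda>i. (f i, h)) (\<lambda>i j. map (\<lambda>y. (y, h)) (P i j))"
    using layer_imm[OF I h] .
  then have "has_toi (cart_prod G H) 3" unfolding has_toi_def by blast
  then have p1: "toi (cart_prod G H) \<ge> 3" using toi_ge[OF finK] by blast
  have p3: "toi (cart_prod G H) \<ge> 4" if ni: "\<not> graph_iso H (complete_graph 2)"
  proof -
    obtain u v w where uvw: "{u, v} \<in> edges H" "{v, w} \<in> edges H" "u \<noteq> w"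
      using H_P3[OF assms(2) assms(4) h2 ni] by blast
    obtain x0 x1 x2 R where oc: "oddcyc G x0 x1 x2 R" using toi3_oddcyc[OF assms(1) g3] by blast
    have "has_toi (cart_prod G H) 4" using constr[OF assms(1) assms(2) oc uvw] .
    then show ?thesis using toi_ge[OF finK] by blast
  qed
  show ?thesis using p1 p3 toi_KP by blast
qed

end
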